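(* Let $n$ be an odd composite integer. Then $|S(n)| = 2$ if and only if (1) $n$ is divisible by some prime $p \equiv 3 \pmod 4$, and (2) $\gcd(p', (n/p)') = 1$ for every prime $p$ dividing $n$.
   Context: For a positive integer $m$, $m'$ denotes the odd part of $m-1$ (so $m-1 = 2^k m'$ with $m'$ odd). The set of strong liars of $n$ (with $n - 1 = 2^k n'$, $n'$ odd) is $S(n) = \{ a \bmod n : a^{n'} \equiv 1 \pmod n \text{ or } a^{2^i n'} \equiv -1 \pmod n \text{ for some } 0 \le i < k\}$. *)

theory Defs
  imports "HOL-Number_Theory.Number_Theory"
begin

definition two_exp :: "nat \<Rightarrow> nat" where
  "two_exp m = multiplicity (2::nat) (m - 1)"

text \<open>m' = the odd part of m - 1.\<close>
definition odd_part_pred :: "nat \<Rightarrow> nat" where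
  "odd_part_pred m = (m - 1) div 2 ^ two_exp m"

definition strong_liars :: "nat \<Rightarrow> nat set" where
  "strong_liars n = {a \<in> {0..<n}.
     [a ^ odd_part_pred n = 1] (mod n) \<or>
     (\<exists>i < two_exp n. [a ^ (2 ^ i * odd_part_pred n) = n - 1] (mod n))}"

end

theory Submission
  imports Defs "HOL-Number_Theory.Residue_Primitive_Roots"
begin

lemma opp_decomp:
  assumes "m \<ge> 2"
  shows "m - 1 = 2 ^ two_exp m * odd_part_pred m" "odd (odd_part_pred m)"
proof -
  show "m - 1 = 2 ^ two_exp m * odd_part_pred m"
    unfolding two_exp_def odd_part_pred_def using multiplicity_dvd[of "2::nat" "m-1"] by simp
  show "odd (odd_part_pred m)"
    unfolding two_exp_def odd_part_pred_def using multiplicity_decompose[where p="2::nat" and x="m-1"] assms by simp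
qed

lemma opp_pos: "m \<ge> 2 \<Longrightarrow> odd_part_pred m > 0"
  by (intro odd_pos) (rule opp_decomp(2))

lemma two_exp_ge1: "odd m \<Longrightarrow> m \<ge> 2 \<Longrightarrow> two_exp m \<ge> 1"
  unfolding two_exp_def by (intro multiplicity_geI) auto

lemma two_exp_ge2: assumes "[m = 1] (mod 4)" "m \<ge> 2" shows "two_exp m \<ge> 2"
proof -
  have "4 dvd m - 1" using assms(1) by (rule cong_to_1_nat)
  then have "2 ^ 2 dvd m - 1" by simp
  then show ?thesis unfolding two_exp_def using assms by (intro multiplicity_geI) auto
qed

lemma gcd_odd_pow2: "odd (x::nat) \<Longrightarrow> gcd x (2 ^ a * y) = gcd x y"
  by (rule gcd_mult_right_left_cancel) auto

lemma gcd_cond_equiv: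
  assumes p: "prime p" "p dvd n" and n: "odd n" "n div p \<ge> 2"
  shows "gcd (odd_part_pred p) (odd_part_pred (n div p)) = 1 \<longleftrightarrow> coprime (p - 1) (odd_part_pred n)"
proof -
  define m where "m = n div p"
  have nm: "n = p * m" using p m_def by simp
  have p2: "p \<ge> 2" using p prime_ge_2_nat by blast
  have m2: "m \<ge> 2" using n m_def by simp
  have "p * m \<ge> 2 * 1" using p2 m2 by (intro mult_le_mono) auto
  then have n2: "n \<ge> 2" using nm by simp
  note pd = opp_decomp[OF p2]
  note md = opp_decomp[OF m2]
  note nd = opp_decomp[OF n2]
  have e1: "n - 1 = (2 ^ two_exp p * m) * odd_part_pred p + (m - 1)"
  proof -
    have pm: "p * m \<ge> 1 * m" using p2 by (intro mult_le_mono) auto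
    have "(p - 1) * m = p * m - m" by (simp add: diff_mult_distrib)
    then have "n - 1 = (p - 1) * m + (m - 1)" using nm pm m2 by linarith
    moreover have "(p - 1) * m = (2 ^ two_exp p * m) * odd_part_pred p" using pd(1) by (simp add: ac_simps)
    ultimately show ?thesis by simp
  qed
  have "gcd (odd_part_pred p) (odd_part_pred m) = gcd (odd_part_pred p) (m - 1)"
    unfolding md(1) by (rule gcd_odd_pow2[OF pd(2), symmetric])
  also have "\<dots> = gcd (odd_part_pred p) (n - 1)" unfolding e1 by (rule gcd_add_mult[symmetric])
  also have "\<dots> = gcd (odd_part_pred p) (odd_part_pred n)" unfolding nd(1) by (rule gcd_odd_pow2[OF pd(2)])
  also have "\<dots> = gcd (odd_part_pred n) (p - 1)"
    unfolding pd(1) gcd_odd_pow2[OF nd(2)] by (rule gcd.commute)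
  finally have calc: "gcd (odd_part_pred p) (odd_part_pred m) = gcd (odd_part_pred n) (p - 1)" .
  have eq: "coprime (p - 1) (odd_part_pred n) \<longleftrightarrow> gcd (odd_part_pred n) (p - 1) = 1"
    unfolding coprime_iff_gcd_eq_1 by (simp only: gcd.commute)
  have calc2: "gcd (odd_part_pred p) (odd_part_pred (n div p)) = gcd (odd_part_pred n) (p - 1)"
    using calc by (simp only: m_def)
  show ?thesis using calc2 eq by auto
qed

lemma coprime_totient:
  assumes "n > 0" and H: "\<And>p. prime p \<Longrightarrow> p dvd n \<Longrightarrow> coprime (p - 1) d \<and> \<not> p dvd d"
  shows "coprime d (totient n)"
proof (rule ccontr)
  assume "\<not> coprime d (totient n)"
  then have "gcd d (totient n) \<noteq> 1" by (simp only: coprime_iff_gcd_eq_1 not_False_eq_True)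
  then obtain r where r: "prime r" "r dvd gcd d (totient n)" using prime_factor_nat by blast
  then have rd: "r dvd d" and rt: "r dvd totient n" by auto
  have "r dvd (\<Prod>p\<in>prime_factors n. p ^ (multiplicity p n - 1) * (p - 1))"
    using rt totient_formula1[OF assms(1)] by simp
  then have "\<exists>p\<in>prime_factors n. r dvd p ^ (multiplicity p n - 1) * (p - 1)"
    by (subst (asm) prime_dvd_prod_iff[OF _ r(1)]) auto
  then obtain p where p: "p \<in> prime_factors n" "r dvd p ^ (multiplicity p n - 1) * (p - 1)"
    by blast
  have pp: "prime p" "p dvd n" using p(1) by auto
  from prime_dvd_multD[OF r(1) p(2)] consider "r dvd p ^ (multiplicity p n - 1)" | "r dvd p - 1"
    by blast
  then show False
  proof cases
    case 1
    then have "r dvd p" using prime_dvd_power r(1) by blast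
    then have "r = p" using primes_dvd_imp_eq r(1) pp(1) by blast
    then show False using H[OF pp] rd by simp
  next
    case 2
    then have g: "r dvd gcd (p - 1) d" using rd by simp
    have eq1: "gcd (p - 1) d = 1" using H[OF pp] by (simp only: coprime_iff_gcd_eq_1)
    have "r dvd 1" using g unfolding eq1 .
    then show False using r(1) by simp
  qed
qed

lemma K:
  fixes n a d :: nat
  assumes "n > 1" "d > 0" "coprime d (totient n)" "[a ^ d = 1] (mod n)"
  shows "[a = 1] (mod n)"
proof -
  have od: "ord n a dvd d" using ord_divides[THEN iffD1, OF assms(4)] .
  have cop: "coprime n a"
  proof (rule ccontr)
    assume "\<not> coprime n a"
    then have "ord n a = 0" by (rule ord_not_coprime)
    then show False using assms(2) od by simp
  qed
  have "ord n a dvd totient n" using order_divides_totient cop by blast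
  then have "ord n a dvd gcd d (totient n)" using od by (rule gcd_greatest[rotated])
  moreover have "gcd d (totient n) = 1" using assms(3) by (simp only: coprime_iff_gcd_eq_1)
  ultimately have "ord n a dvd 1" by simp
  then have "ord n a = Suc 0" by simp
  then show ?thesis using ord_eq_Suc_0_iff[of n a] by simp
qed

lemma sqrt_m1_pp:
  fixes p e :: nat
  assumes p: "prime p" "[p = 1] (mod 4)" and e: "e > 0"
  shows "\<exists>x. p ^ e dvd x ^ 2 + 1"
proof -
  have p2: "p \<ge> 2" using p prime_ge_2_nat by blast
  have pm4: "p mod 4 = 1" using p(2) by (simp add: cong_def)
  then have oddp: "odd p" by presburger
  obtain g where g: "\<forall>k>0. residue_primroot (p ^ k) g"
    using residue_primroot_odd_prime_power_exists[OF p(1) oddp] by blast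
  define m where "m = p ^ e"
  have m1: "m > 1" using e p2 m_def one_less_power[of p e] by simp
  have gr: "residue_primroot m g" using g e m_def by simp
  define \<phi> where "\<phi> = totient m"
  have ordg: "ord m g = \<phi>" "coprime m g" using gr \<phi>_def by (auto simp: residue_primroot_def)
  have phi: "\<phi> = p ^ (e - 1) * (p - 1)" using \<phi>_def m_def totient_prime_power[OF p(1) e] by simp
  have "4 dvd p - 1" using pm4 by presburger
  then have f4: "4 dvd \<phi>" using phi by simp
  have phipos: "\<phi> > 0" using \<phi>_def m1 by simp
  define c where "c = g ^ (\<phi> div 2)"
  have "c ^ 2 = g ^ \<phi>" using f4 unfolding c_def power_mult[symmetric] by (auto elim!: dvdE)
  then have c2: "[c ^ 2 = 1] (mod m)" using ordg ord_divides'[of g \<phi> m] by simp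
  have c1: "\<not> [c = 1] (mod m)"
  proof
    assume "[c = 1] (mod m)"
    then have "\<phi> dvd \<phi> div 2" using ordg ord_divides'[of g "\<phi> div 2" m] c_def by simp
    moreover have "\<phi> div 2 > 0" using f4 phipos by (auto elim!: dvdE)
    ultimately have "\<phi> \<le> \<phi> div 2" by (simp add: dvd_imp_le)
    then show False using phipos by presburger
  qed
  have cpos: "c \<ge> 1"
  proof (rule ccontr)
    assume "\<not> c \<ge> 1" then have "c = 0" by simp
    then show False using c2 m1 by (simp add: cong_def)
  qed
  have "m dvd c ^ 2 - 1" using c2 cong_to_1_nat by blast
  moreover have "c ^ 2 - 1 = (c - 1) * (c + 1)" using cpos by (simp add: power2_eq_square algebra_simps)
  ultimately have dv: "m dvd (c - 1) * (c + 1)" by simp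
  have npc: "\<not> p dvd c - 1"
  proof
    assume pc: "p dvd c - 1"
    have "\<not> p dvd c + 1"
    proof
      assume "p dvd c + 1"
      then have "p dvd (c + 1) - (c - 1)" using pc dvd_diff_nat by blast
      moreover have "(c + 1) - (c - 1) = 2" using cpos by simp
      ultimately have "p dvd 2" by simp
      then have "p \<le> 2" by (simp add: dvd_imp_le)
      then show False using oddp p2 by simp
    qed
    then have "coprime m (c + 1)" using m_def prime_imp_coprime[OF p(1)] by simp
    then have "m dvd c - 1" using dv coprime_dvd_mult_left_iff by blast
    then have "[c = 1] (mod m)" using cpos cong_altdef_nat by blast
    then show False using c1 by simp
  qed
  then have "coprime m (c - 1)" using m_def prime_imp_coprime[OF p(1)] by simp
  then have "m dvd c + 1" using dv coprime_dvd_mult_right_iff by blast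
  moreover have "(g ^ (\<phi> div 4)) ^ 2 = c"
    using f4 unfolding c_def power_mult[symmetric] by (auto elim!: dvdE simp: mult.commute)
  ultimately show ?thesis unfolding m_def by blast
qed

lemma sqrt_m1:
  fixes n :: nat
  shows "odd n \<Longrightarrow> (\<forall>p. prime p \<longrightarrow> p dvd n \<longrightarrow> [p = 1] (mod 4)) \<Longrightarrow>
    (\<exists>a. n dvd a ^ 2 + 1) \<and> [n = 1] (mod 4)"
proof (induction n rule: less_induct)
  case (less n)
  show ?case
  proof (cases "n = 1")
    case True then show ?thesis by simp
  next
    case False
    then obtain p where p: "prime p" "p dvd n" using prime_factor_nat by blast
    have n0: "n \<noteq> 0" using less.prems(1) by (intro notI) simp
    define e where "e = multiplicity p n"
    define m where "m = n div p ^ e"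
    have nm: "n = p ^ e * m" using m_def e_def multiplicity_dvd[of p n] by simp
    have "e \<ge> 1" unfolding e_def using p n0 by (intro multiplicity_geI) auto
    then have e0: "e > 0" by simp
    have npm: "\<not> p dvd m" unfolding m_def e_def by (rule multiplicity_decompose) (use n0 p in auto)
    have p2: "p \<ge> 2" using p prime_ge_2_nat by blast
    have "p ^ e > 1" using e0 p2 one_less_power[of p e] by simp
    moreover have "m > 0" using nm n0 by (cases m) auto
    ultimately have mlt: "m < n" using nm by simp
    have cop: "coprime (p ^ e) m" using npm prime_imp_coprime[OF p(1)] by simp
    have modd: "odd m" using less.prems(1) nm by simp
    have mprem: "\<forall>q. prime q \<longrightarrow> q dvd m \<longrightarrow> [q = 1] (mod 4)" using less.prems(2) nm by auto
    from less.IH[OF mlt modd mprem] obtain b where b: "m dvd b ^ 2 + 1" and m4: "[m = 1] (mod 4)" by blast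
    have p4: "[p = 1] (mod 4)" using less.prems(2) p by blast
    obtain x where x: "p ^ e dvd x ^ 2 + 1" using sqrt_m1_pp[OF p(1) p4 e0] by blast
    obtain a where a: "[a = x] (mod p ^ e)" "[a = b] (mod m)" using binary_chinese_remainder_nat[OF cop] by blast
    have "[a ^ 2 + 1 = x ^ 2 + 1] (mod p ^ e)" using a by (intro cong_add cong_pow) auto
    then have d1: "p ^ e dvd a ^ 2 + 1" using x by (simp add: cong_dvd_iff)
    have "[a ^ 2 + 1 = b ^ 2 + 1] (mod m)" using a by (intro cong_add cong_pow) auto
    then have d2: "m dvd a ^ 2 + 1" using b by (simp add: cong_dvd_iff)
    have "n dvd a ^ 2 + 1" using divides_mult[OF d1 d2 cop] nm by simp
    moreover have "[n = 1] (mod 4)"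
    proof -
      have "[p ^ e * m = 1 ^ e * 1] (mod 4)" using p4 m4 by (intro cong_mult cong_pow) auto
      then show ?thesis using nm by simp
    qed
    ultimately show ?thesis by blast
  qed
qed

lemma cong_m1_int:
  fixes n x :: nat
  assumes "n \<ge> 1"
  shows "[x = n - 1] (mod n) \<longleftrightarrow> [int x = -1] (mod int n)"
proof -
  have "[x = n - 1] (mod n) \<longleftrightarrow> [int x = int (n - 1)] (mod int n)" by (simp add: cong_int_iff)
  also have "int (n - 1) = int n - 1" using assms by simp
  also have "[int x = int n - 1] (mod int n) \<longleftrightarrow> [int x = -1] (mod int n)"
  proof -
    have "[int n - 1 = -1] (mod int n)" by (simp add: cong_iff_dvd_diff)
    then show ?thesis using cong_trans cong_sym by meson
  qed
  finally show ?thesis .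
qed

lemma cong_1_int: "[x = 1] (mod n) \<longleftrightarrow> [int x = 1] (mod int n)"
  using cong_int_iff[of x 1 n] by simp

lemma one_neq_m1: "n > 2 \<Longrightarrow> \<not> [(1::int) = -1] (mod int n)"
proof
  assume "n > 2" "[(1::int) = -1] (mod int n)"
  then have "int n dvd 2" by (simp add: cong_iff_dvd_diff)
  then have "n dvd 2" by presburger
  then show False using \<open>n > 2\<close> by (simp add: dvd_imp_le leD)
qed

lemma pow_m1_odd: "odd d \<Longrightarrow> [x = -1] (mod m) \<Longrightarrow> [x ^ d = -1] (mod (m::int))"
  using cong_pow[of x "-1" m d] by simp

lemma carm_dvd:
  fixes n p :: nat
  assumes "prime p" "p dvd n" "odd n"
  shows "(p - 1) dvd Carmichael n"
proof -
  have n0: "n \<noteq> 0" using assms(3) by (intro notI) simp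
  have oddp: "odd p" using assms(2,3) by (auto elim: dvdE)
  define e where "e = multiplicity p n"
  define m where "m = n div p ^ e"
  have nm: "n = p ^ e * m" using m_def e_def multiplicity_dvd[of p n] by simp
  have "e \<ge> 1" unfolding e_def using assms n0 by (intro multiplicity_geI) auto
  then have e0: "e > 0" by simp
  have npm: "\<not> p dvd m" unfolding m_def e_def by (rule multiplicity_decompose) (use n0 assms in auto)
  have p2: "p \<ge> 2" using assms prime_ge_2_nat by blast
  have pe1: "p ^ e > 1" using e0 p2 one_less_power[of p e] by simp
  have cop: "coprime (p ^ e) m" using npm prime_imp_coprime[OF assms(1)] by simp
  have cpe: "Carmichael (p ^ e) = p ^ (e - 1) * (p - 1)"
    using Carmichael_odd_prime_power[OF assms(1) oddp e0] .
  have "Carmichael (p ^ e) dvd Carmichael n"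
  proof (cases "m = 1")
    case True then show ?thesis using nm by simp
  next
    case False
    then have "m > 1" using nm n0 by (cases m) auto
    then show ?thesis using Carmichael_dvd_mono_coprime[OF cop pe1] nm by simp
  qed
  moreover have "(p - 1) dvd Carmichael (p ^ e)" using cpe by simp
  ultimately show ?thesis using dvd_trans by blast
qed


theorem proposition2p4:
  fixes n :: nat
  assumes "odd n" and "n > 1" and "\<not> prime n"
  shows "card (strong_liars n) = 2 \<longleftrightarrow>
    ((\<exists>p. prime p \<and> p dvd n \<and> [p = 3] (mod 4)) \<and>
     (\<forall>p. prime p \<and> p dvd n \<longrightarrow> gcd (odd_part_pred p) (odd_part_pred (n div p)) = 1))"
proof -
  define k where "k = two_exp n"
  define d where "d = odd_part_pred n"
  have n3: "n \<ge> 3" using assms(1,2) by presburger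
  have nd: "n - 1 = 2 ^ k * d" "odd d" using opp_decomp[of n] n3 k_def d_def by auto
  have k1: "k \<ge> 1" using two_exp_ge1[OF assms(1)] n3 k_def by auto
  have d0: "d > 0" using nd(2) by (intro odd_pos)
  let ?S = "strong_liars n"
  have Sdef: "\<And>a. a \<in> ?S \<longleftrightarrow> a < n \<and> ([a ^ d = 1] (mod n) \<or> (\<exists>i<k. [a ^ (2 ^ i * d) = n - 1] (mod n)))"
    unfolding strong_liars_def k_def d_def by auto
  have n1m: "[int (n - 1) = -1] (mod int n)" using cong_m1_int[of n "n - 1"] n3 by simp
  have nm1pow: "[(n - 1) ^ d = n - 1] (mod n)"
  proof -
    have "[int (n - 1) ^ d = -1] (mod int n)" using pow_m1_odd[OF nd(2) n1m] .
    then have "[int ((n - 1) ^ d) = -1] (mod int n)" by simp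
    then show ?thesis using cong_m1_int[of n "(n - 1) ^ d"] n3 by simp
  qed
  have in1: "1 \<in> ?S" using Sdef n3 by simp
  have inn1: "n - 1 \<in> ?S"
  proof -
    have "[(n - 1) ^ (2 ^ 0 * d) = n - 1] (mod n)" using nm1pow by simp
    then have "\<exists>i<k. [(n - 1) ^ (2 ^ i * d) = n - 1] (mod n)" using k1 by (intro exI[of _ 0]) auto
    then show ?thesis using Sdef[of "n - 1"] n3 by auto
  qed
  have ne: "1 \<noteq> n - 1" using n3 by simp
  have fin: "finite ?S" unfolding strong_liars_def by simp
  have sub2: "{1, n - 1} \<subseteq> ?S" using in1 inn1 by simp
  have c2: "card {1, n - 1} = 2" using ne by simp
  have cardeq: "card ?S = 2 \<longleftrightarrow> ?S \<subseteq> {1, n - 1}"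
  proof
    assume "card ?S = 2"
    then have "{1, n - 1} = ?S" using card_subset_eq[OF fin sub2] c2 by simp
    then show "?S \<subseteq> {1, n - 1}" by simp
  next
    assume "?S \<subseteq> {1, n - 1}"
    then have "?S = {1, n - 1}" using sub2 by blast
    then show "card ?S = 2" using c2 by simp
  qed
  have mp2: "n div p \<ge> 2" if "prime p" "p dvd n" for p
  proof -
    have e: "n = p * (n div p)" using that(2) by simp
    have "n div p \<noteq> 0" using e n3 by (intro notI) simp
    moreover have "n div p \<noteq> 1" using e that(1) assms(3) by (intro notI) simp
    ultimately show ?thesis by simp
  qed
  have pnd: "\<not> p dvd d" if "prime p" "p dvd n" for p
  proof
    assume "p dvd d"
    then have "p dvd n - 1" using nd(1) by simp
    then have "p dvd n - (n - 1)" using that(2) dvd_diff_nat by blast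
    then have "p dvd 1" using n3 by simp
    then show False using that(1) by simp
  qed
  have C2eq: "(\<forall>p. prime p \<and> p dvd n \<longrightarrow> gcd (odd_part_pred p) (odd_part_pred (n div p)) = 1)
     \<longleftrightarrow> (\<forall>p. prime p \<and> p dvd n \<longrightarrow> coprime (p - 1) d)"
    using gcd_cond_equiv[OF _ _ assms(1)] mp2 d_def by auto
  have bwd: "card ?S = 2" if C1: "\<exists>p. prime p \<and> p dvd n \<and> [p = 3] (mod 4)"
    and C2: "\<forall>p. prime p \<and> p dvd n \<longrightarrow> coprime (p - 1) d"
  proof -
    obtain q where q: "prime q" "q dvd n" "[q = 3] (mod 4)" using C1 by blast
    have q4: "q mod 4 = 3" using q(3) by (simp add: cong_def)
    have q3: "q \<ge> 3" using q4 by presburger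
    have ct: "coprime d (totient n)"
      using coprime_totient[of n d] C2 pnd n3 by auto
    have "a \<in> {1, n - 1}" if aS: "a \<in> ?S" for a
    proof -
      have an: "a < n" using aS Sdef by blast
      consider "[a ^ d = 1] (mod n)" | i where "i < k" "[a ^ (2 ^ i * d) = n - 1] (mod n)"
        using aS Sdef by blast
      then show ?thesis
      proof cases
        case 1
        then have "[a = 1] (mod n)" using K[OF _ d0 ct] n3 by simp
        then have "a = 1" using an n3 by (simp add: cong_def)
        then show ?thesis by simp
      next
        case (2 i)
        have ia: "[int a ^ (2 ^ i * d) = -1] (mod int n)"
          using 2(2) cong_m1_int[of n "a ^ (2 ^ i * d)"] n3 by simp
        show ?thesis
        proof (cases "i = 0")
          case True
          then have ia0: "[int a ^ d = -1] (mod int n)" using ia by simp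
          define b where "b = n - a"
          have ib: "int b = int n - int a" using an b_def by simp
          have "[int b = - int a] (mod int n)" unfolding ib by (simp add: cong_iff_dvd_diff)
          then have "[int b ^ d = (- int a) ^ d] (mod int n)" by (rule cong_pow)
          also have "(- int a) ^ d = - (int a ^ d)" using nd(2) by simp
          also have "[- (int a ^ d) = - (-1)] (mod int n)" using ia0 by (rule cong_minus_minus_iff[THEN iffD2])
          finally have "[int (b ^ d) = 1] (mod int n)" by simp
          then have "[b ^ d = 1] (mod n)" using cong_1_int by blast
          then have b1: "[b = 1] (mod n)" using K[OF _ d0 ct] n3 by simp
          have "b \<noteq> n"
          proof
            assume "b = n" then show False using b1 n3 by (simp add: cong_def)
          qed
          then have "b < n" using b_def by simp
          then have "b = 1" using b1 n3 by (simp add: cong_def)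
          then have "a = n - 1" using b_def an by linarith
          then show ?thesis by simp
        next
          case False
          then obtain j where ij: "i = Suc j" by (cases i) auto
          have iq: "[int a ^ (2 ^ i * d) = -1] (mod int q)"
            using ia q(2) by (meson cong_dvd_modulus int_dvd_int_iff)
          have nqa: "\<not> q dvd a"
          proof
            assume "q dvd a"
            then have qa: "int q dvd int a" by simp
            have "int a dvd int a ^ (2 ^ i * d)" using d0 by (intro dvd_power) simp
            then have "int q dvd int a ^ (2 ^ i * d)" using qa dvd_trans by blast
            moreover have "int q dvd int a ^ (2 ^ i * d) + 1" using iq by (simp add: cong_iff_dvd_diff)
            ultimately have "int q dvd 1" using dvd_add_right_iff by blast
            then show False using q3 by simp
          qed
          have ferm: "[a ^ (q - 1) = 1] (mod q)" using fermat_theorem[OF q(1) nqa] .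
          define t where "t = (q - 1) div 2"
          have qt: "q - 1 = 2 * t" and todd: "odd t" using q4 unfolding t_def by presburger+
          define c where "c = a ^ (2 * d)"
          have "c ^ t = (a ^ (q - 1)) ^ d" unfolding c_def qt by (simp add: power_mult[symmetric] ac_simps)
          moreover have "[(a ^ (q - 1)) ^ d = 1 ^ d] (mod q)" using ferm by (rule cong_pow)
          ultimately have ct1: "[c ^ t = 1] (mod q)" by simp
          have "a ^ (2 ^ i * d) = c ^ (2 ^ j)" unfolding c_def ij by (simp add: power_mult[symmetric] ac_simps)
          then have "int a ^ (2 ^ i * d) = int c ^ (2 ^ j)" by (metis of_nat_power)
          then have ciq: "[int c ^ (2 ^ j) = -1] (mod int q)" using iq by simp
          then have "[(int c ^ (2 ^ j)) ^ 2 = (-1) ^ 2] (mod int q)" by (rule cong_pow)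
          then have "[int (c ^ (2 ^ i)) = 1] (mod int q)" unfolding ij by (simp add: power_mult[symmetric] ac_simps)
          then have ct2: "[c ^ (2 ^ i) = 1] (mod q)" using cong_1_int by blast
          have "ord q c dvd t" using ct1 ord_divides by blast
          moreover have "ord q c dvd 2 ^ i" using ct2 ord_divides by blast
          ultimately have "ord q c dvd gcd t (2 ^ i)" by simp
          moreover have "coprime t (2 ^ i)" using todd by simp
          ultimately have "ord q c dvd 1" by (simp only: coprime_iff_gcd_eq_1)
          then have "ord q c = Suc 0" by simp
          then have "[c = 1] (mod q)" using ord_eq_Suc_0_iff by blast
          then have "[int c = 1] (mod int q)" using cong_1_int by blast
          then have "[int c ^ (2 ^ j) = 1 ^ (2 ^ j)] (mod int q)" by (rule cong_pow)
          then have "[(1::int) = -1] (mod int q)" using ciq by (simp add: cong_sym_eq) (meson cong_sym cong_trans)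
          then show ?thesis using one_neq_m1[of q] q3 by simp
        qed
      qed
    qed
    then have "?S \<subseteq> {1, n - 1}" by blast
    then show ?thesis using cardeq by simp
  qed
  have fwd: "(\<exists>p. prime p \<and> p dvd n \<and> [p = 3] (mod 4)) \<and> (\<forall>p. prime p \<and> p dvd n \<longrightarrow> coprime (p - 1) d)"
    if card: "card ?S = 2"
  proof -
    have sub: "?S \<subseteq> {1, n - 1}" using card cardeq by simp
    have C2': "\<forall>p. prime p \<and> p dvd n \<longrightarrow> coprime (p - 1) d"
    proof (intro allI impI, elim conjE)
      fix p assume p: "prime p" "p dvd n"
      show "coprime (p - 1) d"
      proof (rule ccontr)
        assume ncop: "\<not> coprime (p - 1) d"
        define r where "r = gcd (p - 1) d"
        have r1: "r \<noteq> 1" using ncop unfolding r_def by (simp only: coprime_iff_gcd_eq_1 not_False_eq_True)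
        have r0: "r > 0" using d0 r_def by simp
        define L where "L = Carmichael n"
        obtain x where x: "x \<in> totatives n" "ord n x = L" using Carmichael_root_exists[of n] assms(2) L_def by auto
        have "(p - 1) dvd L" using carm_dvd[OF p assms(1)] L_def by simp
        then have rL: "r dvd L" unfolding r_def using dvd_trans gcd_dvd1 by blast
        have rd: "r dvd d" unfolding r_def by simp
        have Lpos: "L > 0" unfolding L_def by simp
        define y where "y = x ^ (L div r)"
        have yd: "[y ^ d = 1] (mod n)"
        proof -
          obtain u where u: "d = r * u" using rd by (auto elim: dvdE)
          have "(L div r) * d = L * u" using u rL by (auto elim!: dvdE simp: r0)
          then have "y ^ d = x ^ (L * u)" unfolding y_def by (simp add: power_mult[symmetric])
          moreover have "ord n x dvd L * u" using x(2) by simp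
          ultimately show ?thesis using ord_divides by metis
        qed
        have y1: "\<not> [y = 1] (mod n)"
        proof
          assume "[y = 1] (mod n)"
          then have "ord n x dvd L div r" unfolding y_def using ord_divides[of x "L div r" n] by simp
          then have dv: "L dvd L div r" using x(2) by simp
          have "L div r > 0" using rL Lpos r0 by (auto elim!: dvdE)
          then have "L \<le> L div r" using dv by (simp add: dvd_imp_le)
          moreover have "L div r < L" using Lpos r0 r1 by (simp add: div_less_dividend)
          ultimately show False by simp
        qed
        define y0 where "y0 = y mod n"
        have y0d: "[y0 ^ d = 1] (mod n)" using yd unfolding y0_def cong_def by (simp add: power_mod)
        have "y0 < n" using assms(2) unfolding y0_def by simp
        then have "y0 \<in> ?S" using Sdef y0d by blast
        then have "y0 \<in> {1, n - 1}" using sub by blast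
        moreover have "y0 \<noteq> 1"
        proof
          assume "y0 = 1" then have "[y = 1] (mod n)" unfolding y0_def cong_def using n3 by simp
          then show False using y1 by simp
        qed
        moreover have "y0 \<noteq> n - 1"
        proof
          assume "y0 = n - 1"
          then have "[n - 1 = 1] (mod n)" using y0d nm1pow by (meson cong_sym cong_trans)
          then have "n - 1 = 1" using n3 by (simp add: cong_def)
          then show False using n3 by simp
        qed
        ultimately show False by simp
      qed
    qed
    have C1: "\<exists>p. prime p \<and> p dvd n \<and> [p = 3] (mod 4)"
    proof (rule ccontr)
      assume nC1: "\<not> (\<exists>p. prime p \<and> p dvd n \<and> [p = 3] (mod 4))"
      have all1: "\<forall>p. prime p \<longrightarrow> p dvd n \<longrightarrow> [p = 1] (mod 4)"
      proof (intro allI impI)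
        fix p assume p: "prime p" "p dvd n"
        have "odd p" using p(2) assms(1) by (auto elim: dvdE)
        moreover have "p mod 4 \<noteq> 3" using nC1 p by (auto simp: cong_def)
        ultimately have "p mod 4 = 1" by presburger
        then show "[p = 1] (mod 4)" by (simp add: cong_def)
      qed
      obtain a where a: "n dvd a ^ 2 + 1" and n4: "[n = 1] (mod 4)" using sqrt_m1[OF assms(1) all1] by blast
      have k2: "k \<ge> 2" using two_exp_ge2[OF n4] n3 k_def by simp
      define a0 where "a0 = a mod n"
      have "int n dvd int a ^ 2 + 1" using a by (metis of_nat_1 of_nat_add of_nat_power int_dvd_int_iff)
      then have "[int a ^ 2 = -1] (mod int n)" by (simp add: cong_iff_dvd_diff)
      moreover have "[int a0 = int a] (mod int n)" unfolding a0_def by (simp add: cong_def of_nat_mod)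
      then have "[int a0 ^ 2 = int a ^ 2] (mod int n)" by (rule cong_pow)
      ultimately have ia: "[int a0 ^ 2 = -1] (mod int n)" by (meson cong_trans)
      then have "[(int a0 ^ 2) ^ d = -1] (mod int n)" by (rule pow_m1_odd[OF nd(2)])
      then have "[int (a0 ^ (2 ^ 1 * d)) = -1] (mod int n)" by (simp add: power_mult)
      then have "[a0 ^ (2 ^ 1 * d) = n - 1] (mod n)" using cong_m1_int[of n] n3 by simp
      moreover have "a0 < n" unfolding a0_def using n3 by simp
      moreover have "(1::nat) < k" using k2 by simp
      ultimately have "a0 < n \<and> (\<exists>i<k. [a0 ^ (2 ^ i * d) = n - 1] (mod n))" by blast
      then have "a0 \<in> ?S" using Sdef by blast
      then have "a0 \<in> {1, n - 1}" using sub by blast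
      moreover have "a0 \<noteq> 1"
      proof
        assume "a0 = 1"
        then have "[(1::int) = -1] (mod int n)" using ia by simp
        then show False using one_neq_m1[of n] n3 by simp
      qed
      moreover have "a0 \<noteq> n - 1"
      proof
        assume "a0 = n - 1"
        then have "[int a0 = -1] (mod int n)" using n1m by simp
        then have "[int a0 ^ 2 = (-1) ^ 2] (mod int n)" by (rule cong_pow)
        then have "[(1::int) = -1] (mod int n)" using ia by (simp) (meson cong_sym cong_trans)
        then show False using one_neq_m1[of n] n3 by simp
      qed
      ultimately show False by simp
    qed
    show ?thesis using C1 C2' by blast
  qed
  show ?thesis using fwd bwd C2eq by blast
qed

end
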